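(* Let $k$ be a positive integer and let $T$ be an $n$-vertex tournament with $\Delta^+(T)-\delta^+(T)\le \frac{n}{10k}-k^2$. Then $T$ contains a $1$-subdivision of $\vec{K}_k$.
   Context: A tournament is a digraph in which for every two distinct vertices exactly one of the two possible arcs between them is present. $\Delta^+(T)$ and $\delta^+(T)$ denote the maximum and minimum out-degree of $T$. $\vec{K}_k$ is the complete digraph on $k$ vertices, having all $k(k-1)$ arcs $uv$ for ordered pairs of distinct vertices. The $1$-subdivision of a digraph is obtained by replacing every arc $uv$ by a directed path $u\to w\to v$ of length two through a new vertex $w$ (distinct new vertices for distinct arcs); $T$ contains it if some subgraph of $T$ is isomorphic to it. *)

theory Defs
  imports Complex_Main
begin

definition tournament :: "'a set \<Rightarrow> ('a \<Rightarrow> 'a \<Rightarrow> bool) \<Rightarrow> bool" where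
  "tournament V A \<longleftrightarrow> finite V \<and>
     (\<forall>u v. A u v \<longrightarrow> u \<in> V \<and> v \<in> V) \<and>
     (\<forall>v. \<not> A v v) \<and>
     (\<forall>u\<in>V. \<forall>v\<in>V. u \<noteq> v \<longrightarrow> (A u v \<longleftrightarrow> \<not> A v u))"

definition outdeg :: "'a set \<Rightarrow> ('a \<Rightarrow> 'a \<Rightarrow> bool) \<Rightarrow> 'a \<Rightarrow> nat" where
  "outdeg V A v = card {w \<in> V. A v w}"

definition max_outdeg :: "'a set \<Rightarrow> ('a \<Rightarrow> 'a \<Rightarrow> bool) \<Rightarrow> nat" where
  "max_outdeg V A = (if V = {} then 0 else Max (outdeg V A ` V))"

definition min_outdeg :: "'a set \<Rightarrow> ('a \<Rightarrow> 'a \<Rightarrow> bool) \<Rightarrow> nat" where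
  "min_outdeg V A = (if V = {} then 0 else Min (outdeg V A ` V))"

text \<open>The digraph (V,A) contains a 1-subdivision of the complete digraph on k vertices:
  branch vertices f i (i < k) and, for each ordered pair (i,j) with i \<noteq> j, a subdivision
  vertex g (i,j), all pairwise distinct, with arcs f i \<rightarrow> g (i,j) \<rightarrow> f j.\<close>
definition contains_subdiv_complete :: "'a set \<Rightarrow> ('a \<Rightarrow> 'a \<Rightarrow> bool) \<Rightarrow> nat \<Rightarrow> bool" where
  "contains_subdiv_complete V A k \<longleftrightarrow>
     (let P = {(i, j). i < k \<and> j < k \<and> i \<noteq> j} in
      \<exists>f :: nat \<Rightarrow> 'a. \<exists>g :: nat \<times> nat \<Rightarrow> 'a.
        inj_on f {..<k} \<and> f ` {..<k} \<subseteq> V \<and>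
        inj_on g P \<and> g ` P \<subseteq> V \<and>
        f ` {..<k} \<inter> g ` P = {} \<and>
        (\<forall>(i, j) \<in> P. A (f i) (g (i, j)) \<and> A (g (i, j)) (f j)))"

end

theory Submission
  imports Defs
begin

lemma few_low_indeg:
  assumes fin: "finite R"
    and tot: "\<forall>u\<in>R. \<forall>v\<in>R. u \<noteq> v \<longrightarrow> (A u v \<or> A v u)"
    and asym: "\<forall>u\<in>R. \<forall>v\<in>R. A u v \<longrightarrow> \<not> A v u"
    and low: "\<forall>v\<in>R. card {w\<in>R. A w v} < s"
  shows "card R \<le> 2*s"
proof (cases "R = {}")
  case True then show ?thesis by simp
next
  case False
  then have r0: "card R > 0" using fin by auto
  have s0: "s > 0" using low False by auto
  define E where "E = Sigma R (\<lambda>v. {w\<in>R. A w v})"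
  define E' where "E' = Sigma R (\<lambda>v. {w\<in>R. A v w})"
  have cE: "card E = (\<Sum>v\<in>R. card {w\<in>R. A w v})"
    unfolding E_def using fin by (simp add: card_SigmaI)
  have "E' = (\<lambda>(a,b). (b,a)) ` E"
    unfolding E_def E'_def by auto
  moreover have "inj_on (\<lambda>(a,b). (b,a)) E" by (auto simp: inj_on_def)
  ultimately have cE': "card E' = card E" by (simp add: card_image)
  have un: "E \<union> E' = Sigma R (\<lambda>v. R - {v})"
    unfolding E_def E'_def using tot asym by blast
  have dis: "E \<inter> E' = {}"
    unfolding E_def E'_def using asym by blast
  have finE: "finite E" "finite E'" unfolding E_def E'_def using fin by auto
  have "card (Sigma R (\<lambda>v. R - {v})) = (\<Sum>v\<in>R. card R - 1)"
    using fin by (simp add: card_SigmaI)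
  also have "\<dots> = card R * (card R - 1)" by simp
  finally have c2: "card E + card E' = card R * (card R - 1)"
    using un dis finE by (metis card_Un_disjoint)
  have "(\<Sum>v\<in>R. card {w\<in>R. A w v}) \<le> card R * (s - 1)"
    using sum_bounded_above[of R "\<lambda>v. card {w\<in>R. A w v}" "s - 1"] low by fastforce
  then have "card R * (card R - 1) \<le> card R * (2 * (s - 1))"
  proof -
    have "card R * (card R - 1) = 2 * (\<Sum>v\<in>R. card {w\<in>R. A w v})" using c2 cE cE' by simp
    also have "\<dots> \<le> 2 * (card R * (s - 1))" using \<open>(\<Sum>v\<in>R. card {w\<in>R. A w v}) \<le> card R * (s - 1)\<close> by simp
    finally show ?thesis by (simp add: algebra_simps)
  qed
  then have "card R - 1 \<le> 2 * (s - 1)" using r0 by simp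
  then show ?thesis using s0 by simp
qed
definition pth :: "'a set \<Rightarrow> ('a \<Rightarrow> 'a \<Rightarrow> bool) \<Rightarrow> 'a \<Rightarrow> 'a \<Rightarrow> nat" where
  "pth V A u v = card {w\<in>V. A u w \<and> A w v}"

definition badset :: "'a set \<Rightarrow> ('a \<Rightarrow> 'a \<Rightarrow> bool) \<Rightarrow> nat \<Rightarrow> 'a \<Rightarrow> 'a set" where
  "badset V A t u = {v\<in>V. v \<noteq> u \<and> (pth V A u v < t \<or> pth V A v u < t)}"

lemma outdeg_bounds:
  assumes "tournament V A" "v \<in> V"
  shows "min_outdeg V A \<le> outdeg V A v \<and> outdeg V A v \<le> max_outdeg V A"
proof -
  have "finite V" using assms(1) by (simp add: tournament_def)
  then show ?thesis using assms(2) unfolding min_outdeg_def max_outdeg_def by auto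
qed

lemma bad_bound:
  assumes T: "tournament V A" and u: "u \<in> V"
  shows "card (badset V A t u) \<le> 4 * (t + (max_outdeg V A - min_outdeg V A))"
proof -
  define mx where "mx = max_outdeg V A"
  define mn where "mn = min_outdeg V A"
  define D where "D = mx - mn"
  have fin: "finite V" and inV: "\<And>x y. A x y \<Longrightarrow> x \<in> V \<and> y \<in> V"
    and irr: "\<And>x. \<not> A x x"
    and tt: "\<And>x y. x \<in> V \<Longrightarrow> y \<in> V \<Longrightarrow> x \<noteq> y \<Longrightarrow> A x y \<longleftrightarrow> \<not> A y x"
    using T unfolding tournament_def by blast+
  have asym: "\<not> A y x" if a: "A x y" for x y
  proof -
    have "x \<in> V" "y \<in> V" using inV[OF a] by auto
    moreover have "x \<noteq> y" using irr a by auto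
    ultimately show ?thesis using tt[of x y] a by blast
  qed
  have tot: "\<And>x y. x \<in> V \<Longrightarrow> y \<in> V \<Longrightarrow> x \<noteq> y \<Longrightarrow> A x y \<or> A y x" using tt by meson
  have dmn: "\<And>v. v \<in> V \<Longrightarrow> mn \<le> outdeg V A v" and dmx: "\<And>v. v \<in> V \<Longrightarrow> outdeg V A v \<le> mx"
    using outdeg_bounds[OF T] unfolding mx_def mn_def by auto
  have Dmx: "D + mn = mx" using dmn[OF u] dmx[OF u] unfolding D_def by simp
  define Out where "Out = {w\<in>V. A u w}"
  define In where "In = {w\<in>V. A w u}"
  have finO: "finite Out" and finI: "finite In" unfolding Out_def In_def using fin by auto
  define R1 where "R1 = {v\<in>Out. card {w\<in>Out. A w v} < t + D}"
  define R2 where "R2 = {v\<in>In. card {w\<in>In. A v w} < t + D}"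
  have sub: "badset V A t u \<subseteq> R1 \<union> R2"
  proof
    fix v assume "v \<in> badset V A t u"
    then have v: "v \<in> V" "v \<noteq> u" and bad: "pth V A u v < t \<or> pth V A v u < t"
      unfolding badset_def by auto
    have "A u v \<or> A v u" using tot[OF u v(1)] v(2) by auto
    then show "v \<in> R1 \<union> R2"
    proof
      assume uv: "A u v"
      then have vO: "v \<in> Out" unfolding Out_def using v by auto
      have "card {w\<in>Out. A w v} < t + D"
      proof (rule ccontr)
        assume "\<not> ?thesis"
        then have big: "t + D \<le> card {w\<in>Out. A w v}" by simp
        have p1: "pth V A u v = card {w\<in>Out. A w v}"
          unfolding pth_def Out_def by (rule arg_cong[where f=card]) auto
        have p2: "pth V A v u = card {w\<in>In. A v w}"
          unfolding pth_def In_def by (rule arg_cong[where f=card]) auto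
        have "{w\<in>V. A v w} \<subseteq> {w\<in>Out. A v w} \<union> {w\<in>In. A v w}"
          unfolding Out_def In_def using tot[OF u] asym[OF uv] by auto
        then have "outdeg V A v \<le> card ({w\<in>Out. A v w} \<union> {w\<in>In. A v w})"
          unfolding outdeg_def using finO finI by (intro card_mono) auto
        also have "\<dots> \<le> card {w\<in>Out. A v w} + card {w\<in>In. A v w}" by (rule card_Un_le)
        finally have o1: "outdeg V A v \<le> card {w\<in>Out. A v w} + card {w\<in>In. A v w}" .
        have "card {w\<in>Out. A v w} + card {w\<in>Out. A w v} = card ({w\<in>Out. A v w} \<union> {w\<in>Out. A w v})"
          using finO asym by (intro card_Un_disjoint[symmetric]) auto
        also have "\<dots> \<le> card Out" using finO by (intro card_mono) auto
        finally have o2: "card {w\<in>Out. A v w} + card {w\<in>Out. A w v} \<le> card Out" .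
        have o3: "card Out \<le> mx" using dmx[OF u] unfolding outdeg_def Out_def .
        have o4: "mn \<le> outdeg V A v" using dmn[OF v(1)] .
        from bad show False using p1 p2 o1 o2 o3 o4 big Dmx by linarith
      qed
      then show ?thesis unfolding R1_def using vO by auto
    next
      assume vu: "A v u"
      then have vI: "v \<in> In" unfolding In_def using v by auto
      have "card {w\<in>In. A v w} < t + D"
      proof (rule ccontr)
        assume "\<not> ?thesis"
        then have big: "t + D \<le> card {w\<in>In. A v w}" by simp
        have p1: "pth V A u v = card {w\<in>Out. A w v}"
          unfolding pth_def Out_def by (rule arg_cong[where f=card]) auto
        have p2: "pth V A v u = card {w\<in>In. A v w}"
          unfolding pth_def In_def by (rule arg_cong[where f=card]) auto
        have "{w\<in>In. A v w} \<union> {w\<in>Out. A v w} \<union> {u} \<subseteq> {w\<in>V. A v w}"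
          unfolding Out_def In_def using vu u by auto
        then have "card ({w\<in>In. A v w} \<union> {w\<in>Out. A v w} \<union> {u}) \<le> outdeg V A v"
          unfolding outdeg_def using fin by (intro card_mono) auto
        moreover have "card ({w\<in>In. A v w} \<union> {w\<in>Out. A v w} \<union> {u}) = card {w\<in>In. A v w} + card {w\<in>Out. A v w} + 1"
        proof -
          have "card ({w\<in>In. A v w} \<union> {w\<in>Out. A v w} \<union> {u}) = card ({w\<in>In. A v w} \<union> {w\<in>Out. A v w}) + card {u}"
            using fin irr unfolding In_def Out_def by (intro card_Un_disjoint) auto
          moreover have "card ({w\<in>In. A v w} \<union> {w\<in>Out. A v w}) = card {w\<in>In. A v w} + card {w\<in>Out. A v w}"
            using fin asym unfolding In_def Out_def by (intro card_Un_disjoint) auto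
          ultimately show ?thesis by simp
        qed
        ultimately have o1: "card {w\<in>In. A v w} + card {w\<in>Out. A v w} + 1 \<le> outdeg V A v" by simp
        have "Out \<subseteq> {w\<in>Out. A v w} \<union> {w\<in>Out. A w v}"
          unfolding Out_def using tot asym[OF vu] v by auto
        then have "card Out \<le> card ({w\<in>Out. A v w} \<union> {w\<in>Out. A w v})"
          using finO by (intro card_mono) auto
        also have "\<dots> \<le> card {w\<in>Out. A v w} + card {w\<in>Out. A w v}" by (rule card_Un_le)
        finally have o2: "card Out \<le> card {w\<in>Out. A v w} + card {w\<in>Out. A w v}" .
        have o3: "mn \<le> card Out" using dmn[OF u] unfolding outdeg_def Out_def .
        have o4: "outdeg V A v \<le> mx" using dmx[OF v(1)] .
        from bad show False using p1 p2 o1 o2 o3 o4 big Dmx by linarith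
      qed
      then show ?thesis unfolding R2_def using vI by auto
    qed
  qed
  have c1: "card R1 \<le> 2 * (t + D)"
  proof (rule few_low_indeg)
    show "finite R1" unfolding R1_def using finO by auto
    show "\<forall>x\<in>R1. \<forall>y\<in>R1. x \<noteq> y \<longrightarrow> A x y \<or> A y x"
      unfolding R1_def Out_def using tot by blast
    show "\<forall>x\<in>R1. \<forall>y\<in>R1. A x y \<longrightarrow> \<not> A y x" using asym by blast
    show "\<forall>v\<in>R1. card {w \<in> R1. A w v} < t + D"
    proof
      fix v assume vR: "v \<in> R1"
      have "card {w \<in> R1. A w v} \<le> card {w\<in>Out. A w v}"
        using finO unfolding R1_def by (intro card_mono) auto
      then show "card {w \<in> R1. A w v} < t + D" using vR unfolding R1_def by auto
    qed
  qed
  have c2: "card R2 \<le> 2 * (t + D)"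
  proof (rule few_low_indeg[where A="\<lambda>x y. A y x"])
    show "finite R2" unfolding R2_def using finI by auto
    show "\<forall>x\<in>R2. \<forall>y\<in>R2. x \<noteq> y \<longrightarrow> A y x \<or> A x y"
      unfolding R2_def In_def using tot by blast
    show "\<forall>x\<in>R2. \<forall>y\<in>R2. A y x \<longrightarrow> \<not> A x y" using asym by blast
    show "\<forall>v\<in>R2. card {w \<in> R2. A v w} < t + D"
    proof
      fix v assume vR: "v \<in> R2"
      have "card {w \<in> R2. A v w} \<le> card {w\<in>In. A v w}"
        using finI unfolding R2_def by (intro card_mono) auto
      then show "card {w \<in> R2. A v w} < t + D" using vR unfolding R2_def by auto
    qed
  qed
  have "card (badset V A t u) \<le> card (R1 \<union> R2)"
    using sub finO finI unfolding R1_def R2_def by (intro card_mono) auto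
  also have "\<dots> \<le> card R1 + card R2" by (rule card_Un_le)
  finally show ?thesis using c1 c2 unfolding D_def mx_def mn_def by simp
qed

lemma branch:
  assumes fin: "finite V" and bb: "\<forall>u\<in>V. card (badset V A t u) \<le> b"
  shows "(m - 1) * (b + 1) < card V \<Longrightarrow> \<exists>f. inj_on f {..<m} \<and> f ` {..<m} \<subseteq> V \<and>
           (\<forall>i<m. \<forall>j<m. i \<noteq> j \<longrightarrow> t \<le> pth V A (f i) (f j))"
proof (induction m)
  case 0
  then show ?case by auto
next
  case (Suc m)
  have "(m - 1) * (b + 1) \<le> m * (b + 1)" by (intro mult_le_mono1) simp
  moreover have "m * (b + 1) < card V" using Suc.prems by simp
  ultimately obtain f where f: "inj_on f {..<m}" "f ` {..<m} \<subseteq> V"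
      "\<forall>i<m. \<forall>j<m. i \<noteq> j \<longrightarrow> t \<le> pth V A (f i) (f j)"
    using Suc.IH by fastforce
  define X where "X = (\<Union>i<m. insert (f i) (badset V A t (f i)))"
  have finB: "\<And>x. finite (badset V A t x)" using fin unfolding badset_def by auto
  have "card X \<le> (\<Sum>i<m. card (insert (f i) (badset V A t (f i))))"
    unfolding X_def by (rule card_UN_le) simp
  also have "\<dots> \<le> (\<Sum>i<m. b + 1)"
  proof (rule sum_mono)
    fix i assume "i \<in> {..<m}"
    then have "f i \<in> V" using f(2) by auto
    then have "card (badset V A t (f i)) \<le> b" using bb by auto
    then show "card (insert (f i) (badset V A t (f i))) \<le> b + 1"
      using finB by (simp add: card_insert_if)
  qed
  also have "\<dots> = m * (b + 1)" by simp
  finally have cX: "card X < card V" using \<open>m * (b + 1) < card V\<close> by simp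
  have "\<not> V \<subseteq> X"
  proof
    assume "V \<subseteq> X"
    moreover have "finite X" unfolding X_def using finB by auto
    ultimately have "card V \<le> card X" by (rule card_mono[rotated])
    then show False using cX by simp
  qed
  then obtain v where v: "v \<in> V" "v \<notin> X" by auto
  have vX: "\<And>i. i < m \<Longrightarrow> v \<noteq> f i \<and> v \<notin> badset V A t (f i)" using v(2) unfolding X_def by auto
  define f' where "f' = f(m := v)"
  have "inj_on f' {..<Suc m}"
    unfolding f'_def using f(1) vX by (auto simp: inj_on_def less_Suc_eq) blast+
  moreover have "f' ` {..<Suc m} \<subseteq> V"
    unfolding f'_def using f(2) v(1) by (auto simp: less_Suc_eq)
  moreover have "\<forall>i<Suc m. \<forall>j<Suc m. i \<noteq> j \<longrightarrow> t \<le> pth V A (f' i) (f' j)"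
  proof (intro allI impI)
    fix i j assume ij: "i < Suc m" "j < Suc m" "i \<noteq> j"
    show "t \<le> pth V A (f' i) (f' j)"
    proof (cases "i < m \<and> j < m")
      case True then show ?thesis using f(3) ij unfolding f'_def by auto
    next
      case False
      then have "(i = m \<and> j < m) \<or> (j = m \<and> i < m)" using ij by auto
      then show ?thesis
      proof
        assume h: "i = m \<and> j < m"
        then have "f j \<in> V" using f(2) by auto
        then show ?thesis using vX[of j] h v(1) unfolding f'_def badset_def by auto
      next
        assume h: "j = m \<and> i < m"
        then have "f i \<in> V" using f(2) by auto
        then show ?thesis using vX[of i] h v(1) unfolding f'_def badset_def by auto
      qed
    qed
  qed
  ultimately show ?case by blast
qed

lemma sdr:
  assumes "finite P" "finite B"
  shows "(\<forall>x\<in>P. finite (S x) \<and> card B + card P \<le> card (S x)) \<Longrightarrow>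
         \<exists>g. inj_on g P \<and> (\<forall>x\<in>P. g x \<in> S x - B)"
  using assms(1)
proof (induction P rule: finite_induct)
  case empty
  then show ?case by auto
next
  case (insert x P)
  have "\<forall>y\<in>P. finite (S y) \<and> card B + card P \<le> card (S y)"
    using insert.prems insert.hyps by auto
  then obtain g where g: "inj_on g P" "\<forall>y\<in>P. g y \<in> S y - B" using insert.IH by blast
  have fS: "finite (S x)" and cS: "card B + card P + 1 \<le> card (S x)"
    using insert.prems insert.hyps by auto
  have "card (S x) \<le> card (S x - B - g ` P) + card (B \<union> g ` P)"
  proof -
    have "S x \<subseteq> (S x - B - g ` P) \<union> (B \<union> g ` P)" by auto
    then have "card (S x) \<le> card ((S x - B - g ` P) \<union> (B \<union> g ` P))"
      using fS assms(2) insert.hyps by (intro card_mono) auto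
    also have "\<dots> \<le> card (S x - B - g ` P) + card (B \<union> g ` P)" by (rule card_Un_le)
    finally show ?thesis .
  qed
  moreover have "card (B \<union> g ` P) \<le> card B + card P"
    using card_Un_le[of B "g ` P"] card_image_le[OF insert.hyps(1), of g] by linarith
  ultimately have "card (S x - B - g ` P) > 0" using cS by linarith
  then obtain w where w: "w \<in> S x - B - g ` P" by (metis card_gt_0_iff ex_in_conv)
  define g' where "g' = g(x := w)"
  have "inj_on g' (insert x P)"
    unfolding g'_def using g(1) w insert.hyps(2) by (auto simp: inj_on_def)
  moreover have "\<forall>y\<in>insert x P. g' y \<in> S y - B"
    unfolding g'_def using g(2) w insert.hyps(2) by auto
  ultimately show ?case by blast
qed
lemma arith_main:
  fixes k n D :: nat
  assumes k: "k \<ge> 1" and h: "real D \<le> real n / (10 * real k) - real k ^ 2"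
  shows "(k - 1) * (4 * (k * k + k + D) + 1) < n"
proof -
  define kk where "kk = real k"
  define N where "N = real n"
  define d where "d = real D"
  have kk1: "kk \<ge> 1" using k unfolding kk_def by simp
  have d0: "d \<ge> 0" unfolding d_def by simp
  have "d * (10 * kk) \<le> (N / (10 * kk) - kk ^ 2) * (10 * kk)"
    using h kk1 unfolding d_def N_def kk_def by (intro mult_right_mono) auto
  also have "\<dots> = N - 10 * kk ^ 3" using kk1 by (simp add: field_simps power2_eq_square power3_eq_cube)
  finally have h1: "10 * (kk * d) \<le> N - 10 * kk ^ 3" by (simp add: algebra_simps)
  have h2: "(kk - 1) * d \<le> kk * d" using d0 by (simp add: algebra_simps)
  have k3: "kk ^ 3 \<ge> 0" using kk1 by simp
  have N0: "N \<ge> 0" unfolding N_def by simp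
  have e: "(kk - 1) * (4 * (kk * kk + kk + d) + 1) = 4 * kk ^ 3 - 3 * kk + 4 * ((kk - 1) * d) - 1"
    by (simp add: algebra_simps power3_eq_cube)
  have "(kk - 1) * (4 * (kk * kk + kk + d) + 1) < N"
    unfolding e using h1 h2 kk1 k3 N0 by linarith
  moreover have "real ((k - 1) * (4 * (k * k + k + D) + 1)) = (kk - 1) * (4 * (kk * kk + kk + d) + 1)"
  proof -
    have "real ((k - 1) * (4 * (k * k + k + D) + 1)) = real (k - 1) * real (4 * (k * k + k + D) + 1)"
      by (rule of_nat_mult)
    moreover have "real (k - 1) = kk - 1" using k unfolding kk_def by (simp add: of_nat_diff)
    moreover have "real (4 * (k * k + k + D) + 1) = 4 * (kk * kk + kk + d) + 1"
      unfolding kk_def d_def by simp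
    ultimately show ?thesis by simp
  qed
  ultimately show ?thesis unfolding N_def by linarith
qed

theorem theorem1p3:
  fixes V :: "'a set" and A :: "'a \<Rightarrow> 'a \<Rightarrow> bool" and k n :: nat
  assumes "tournament V A"
    and "card V = n"
    and "k \<ge> 1"
    and "real (max_outdeg V A) - real (min_outdeg V A) \<le> real n / (10 * real k) - real k ^ 2"
  shows "contains_subdiv_complete V A k"
proof -
  note T = assms(1)
  have fin: "finite V" using T unfolding tournament_def by blast
  define D where "D = max_outdeg V A - min_outdeg V A"
  have mle: "min_outdeg V A \<le> max_outdeg V A"
  proof (cases "V = {}")
    case True then show ?thesis unfolding min_outdeg_def max_outdeg_def by simp
  next
    case False
    then obtain v where "v \<in> V" by auto
    then show ?thesis using outdeg_bounds[OF T] by fastforce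
  qed
  have Dr: "real D = real (max_outdeg V A) - real (min_outdeg V A)"
    unfolding D_def using mle by (simp add: of_nat_diff)
  define t where "t = k * k + k"
  define b where "b = 4 * (t + D)"
  have bb: "\<forall>u\<in>V. card (badset V A t u) \<le> b"
    using bad_bound[OF T] unfolding b_def D_def by blast
  have ar: "(k - 1) * (b + 1) < card V"
    using arith_main[OF assms(3), of D n] assms(2,4) Dr unfolding b_def t_def by simp
  obtain f where f: "inj_on f {..<k}" "f ` {..<k} \<subseteq> V"
      "\<forall>i<k. \<forall>j<k. i \<noteq> j \<longrightarrow> t \<le> pth V A (f i) (f j)"
    using branch[OF fin bb ar] by blast
  define P where "P = {(i, j). i < k \<and> j < k \<and> i \<noteq> j}"
  define B where "B = f ` {..<k}"
  define S where "S = (\<lambda>(i, j). {w\<in>V. A (f i) w \<and> A w (f j)})"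
  have finP: "finite P"
  proof -
    have "P \<subseteq> {..<k} \<times> {..<k}" unfolding P_def by auto
    then show ?thesis by (rule finite_subset) simp
  qed
  have cP: "card P \<le> k * k"
  proof -
    have "P \<subseteq> {..<k} \<times> {..<k}" unfolding P_def by auto
    then have "card P \<le> card ({..<k} \<times> {..<k})" by (intro card_mono) auto
    then show ?thesis by (simp add: card_cartesian_product)
  qed
  have cB: "card B \<le> k" unfolding B_def using card_image_le[of "{..<k}" f] by simp
  have "\<forall>x\<in>P. finite (S x) \<and> card B + card P \<le> card (S x)"
  proof
    fix x assume xP: "x \<in> P"
    then obtain i j where x: "x = (i, j)" "i < k" "j < k" "i \<noteq> j" unfolding P_def by auto
    have "card (S x) = pth V A (f i) (f j)" unfolding S_def pth_def x by simp
    then have "t \<le> card (S x)" using f(3) x by auto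
    moreover have "finite (S x)" unfolding S_def x using fin by simp
    ultimately show "finite (S x) \<and> card B + card P \<le> card (S x)"
      using cB cP unfolding t_def by simp
  qed
  then obtain g where g: "inj_on g P" "\<forall>x\<in>P. g x \<in> S x - B"
    using sdr[OF finP, of B S] unfolding B_def by blast
  have "g ` P \<subseteq> V" using g(2) unfolding S_def by fastforce
  moreover have "f ` {..<k} \<inter> g ` P = {}"
  proof -
    have "\<And>x. x \<in> P \<Longrightarrow> g x \<notin> f ` {..<k}" using g(2) unfolding B_def by blast
    note h = this
    show ?thesis
    proof (rule equals0I)
      fix y assume "y \<in> f ` {..<k} \<inter> g ` P"
      then obtain i x where ix: "i < k" "y = f i" "x \<in> P" "y = g x" by blast
      then have "g x \<in> f ` {..<k}" by auto
      then show False using h[OF ix(3)] by simp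
    qed
  qed
  moreover have "\<forall>(i, j) \<in> P. A (f i) (g (i, j)) \<and> A (g (i, j)) (f j)"
    using g(2) unfolding S_def by fastforce
  ultimately show ?thesis
    unfolding contains_subdiv_complete_def Let_def P_def[symmetric] using f(1,2) g(1) by blast
qed

end
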